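(* Let $A,G$ be countable abelian groups. Then $\mathrm{PExt}(A,G)$ is the closure of $\{0\}$ in $\mathrm{Ext}(A,G)$, and $\mathrm{Ext}_{\mathrm w}(A,G)$ is a Polish group.
   Context: For countable $A,G$: $\mathsf Z(A,G)$ is the Polish group (closed in $G^{A\times A}$, $G$ discrete) of functions $c:A\times A\to G$ with $c(x,0)=0$, $c(x,y)=c(y,x)$, $c(y,z)-c(x+y,z)+c(x,y+z)-c(x,y)=0$; $\mathsf B(A,G)$ is the Polishable subgroup of coboundaries $c(x,y)=\phi(y)-\phi(x+y)+\phi(x)$ with $\phi:A\to G$, $\phi(0)=0$; $\mathsf B_{\mathrm w}(A,G)$ is the subgroup of $c\in\mathsf Z(A,G)$ such that $c|_{S\times S}\in\mathsf B(S,G)$ for every finite subgroup $S\le A$. Then $\mathrm{Ext}(A,G)=\mathsf Z(A,G)/\mathsf B(A,G)$, $\mathrm{PExt}(A,G)=\mathsf B_{\mathrm w}(A,G)/\mathsf B(A,G)$, and $\mathrm{Ext}_{\mathrm w}(A,G)=\mathsf Z(A,G)/\mathsf B_{\mathrm w}(A,G)$, regarded as groups with a Polish cover (quotients of a Polish group by a Polishable subgroup). Closure of $\{0\}$ in $\mathrm{Ext}(A,G)$ means $\overline{\mathsf B(A,G)}/\mathsf B(A,G)$; a group with a Polish cover $\hat G/N$ is a Polish group if $N$ is closed in $\hat G$. *)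

theory Defs
  imports "HOL-Analysis.Analysis" "HOL-Library.Countable"
begin

definition cocycle :: "('a::ab_group_add \<times> 'a \<Rightarrow> 'g::ab_group_add) \<Rightarrow> bool" where
  "cocycle c \<longleftrightarrow> (\<forall>x. c (x, 0) = 0) \<and> (\<forall>x y. c (x, y) = c (y, x)) \<and>
     (\<forall>x y z. c (y, z) - c (x + y, z) + c (x, y + z) - c (x, y) = 0)"

definition Zgrp :: "('a::ab_group_add \<times> 'a \<Rightarrow> 'g::ab_group_add) set" where
  "Zgrp = {c. cocycle c}"

definition coboundary_on :: "'a::ab_group_add set \<Rightarrow> ('a \<times> 'a \<Rightarrow> 'g::ab_group_add) \<Rightarrow> bool" where
  "coboundary_on S c \<longleftrightarrow> (\<exists>\<phi> :: 'a \<Rightarrow> 'g. \<phi> 0 = 0 \<and>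
      (\<forall>x\<in>S. \<forall>y\<in>S. c (x, y) = \<phi> y - \<phi> (x + y) + \<phi> x))"

definition Bgrp :: "('a::ab_group_add \<times> 'a \<Rightarrow> 'g::ab_group_add) set" where
  "Bgrp = {c. coboundary_on UNIV c}"

definition finite_subgroup :: "'a::ab_group_add set \<Rightarrow> bool" where
  "finite_subgroup S \<longleftrightarrow> finite S \<and> 0 \<in> S \<and> (\<forall>x\<in>S. \<forall>y\<in>S. x + y \<in> S) \<and> (\<forall>x\<in>S. - x \<in> S)"

definition Bw_grp :: "('a::ab_group_add \<times> 'a \<Rightarrow> 'g::ab_group_add) set" where
  "Bw_grp = {c \<in> Zgrp. \<forall>S. finite_subgroup S \<longrightarrow> coboundary_on S c}"

definition cochain_top :: "('a \<times> 'a \<Rightarrow> 'g) topology" where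
  "cochain_top = product_topology (\<lambda>_. discrete_topology UNIV) UNIV"

definition Ztop :: "('a::ab_group_add \<times> 'a \<Rightarrow> 'g::ab_group_add) topology" where
  "Ztop = subtopology cochain_top Zgrp"

end

theory Submission
  imports Defs
begin


primrec nsc :: "nat \<Rightarrow> 'a::ab_group_add \<Rightarrow> 'a" where
  "nsc 0 x = 0" | "nsc (Suc n) x = x + nsc n x"

definition zsc :: "int \<Rightarrow> 'a::ab_group_add \<Rightarrow> 'a" where
  "zsc k x = nsc (nat k) x - nsc (nat (-k)) x"

lemma nsc_add: "nsc (m+n) x = nsc m x + nsc n x"
  by (induct m) (simp_all add: add.assoc)
lemma nsc_plus: "nsc n (x+y) = nsc n x + nsc n y"
  by (induct n) (simp_all add: algebra_simps)
lemma nsc_uminus: "nsc n (-x) = - nsc n x"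
  by (induct n) (simp_all add: algebra_simps)
lemma nsc_diff: "nsc n (x-y) = nsc n x - nsc n y"
  unfolding diff_conv_add_uminus nsc_plus nsc_uminus ..
lemma nsc_mult: "nsc (m*n) x = nsc m (nsc n x)"
  by (induct m) (simp_all add: nsc_add nsc_plus)
lemma nsc_zero[simp]: "nsc n 0 = 0"
  by (induct n) simp_all

lemma zsc_int: "zsc (int k) x = nsc k x"
  by (simp add: zsc_def)
lemma zsc_nint: "zsc (- int k) x = - nsc k x"
  by (simp add: zsc_def)

lemma zsc_diff_nat: "zsc (int m - int n) x = nsc m x - nsc n x"
proof (cases "n \<le> m")
  case True
  have e: "int m - int n = int (m - n)" using True by simp
  have "nsc m x = nsc (m-n) x + nsc n x" using nsc_add[of "m-n" n x] True by simp
  then show ?thesis unfolding e zsc_int by simp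
next
  case False
  have e: "int m - int n = - int (n - m)" using False by simp
  have "nsc n x = nsc (n-m) x + nsc m x" using nsc_add[of "n-m" m x] False by simp
  then show ?thesis unfolding e zsc_nint by simp
qed

lemma int_repr: "(a::int) = int (nat a) - int (nat (-a))" by simp

lemma zsc_add: "zsc (a+b) x = zsc a x + zsc b x"
proof -
  have "a + b = int (nat a + nat b) - int (nat (-a) + nat (-b))" by simp
  then have "zsc (a+b) x = nsc (nat a + nat b) x - nsc (nat (-a) + nat (-b)) x"
    by (metis zsc_diff_nat)
  then show ?thesis by (simp add: zsc_def nsc_add)
qed

lemma zsc_plus: "zsc a (x+y) = zsc a x + zsc a y"
  by (simp add: zsc_def nsc_plus)
lemma zsc_uminus_arg: "zsc a (-x) = - zsc a x"
  by (simp add: zsc_def nsc_uminus)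
lemma zsc_diff_arg: "zsc a (x-y) = zsc a x - zsc a y"
  by (simp add: zsc_def nsc_diff)
lemma zsc_neg: "zsc (-a) x = - zsc a x"
  by (simp add: zsc_def)
lemma zsc_sub: "zsc (a-b) x = zsc a x - zsc b x"
  by (metis diff_conv_add_uminus zsc_add zsc_neg)
lemma zsc_0[simp]: "zsc 0 x = 0" by (simp add: zsc_def)
lemma zsc_1[simp]: "zsc 1 x = x" by (simp add: zsc_def)
lemma zsc_zero[simp]: "zsc a 0 = 0" by (simp add: zsc_def)

lemma zsc_mult: "zsc (a*b) x = zsc a (zsc b x)"
proof -
  obtain m1 n1 m2 n2 where a: "a = int m1 - int n1" and b: "b = int m2 - int n2"
    by (meson int_repr)
  have "a*b = int (m1*m2+n1*n2) - int (m1*n2+n1*m2)" unfolding a b by (simp add: algebra_simps)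
  then have "zsc (a*b) x = nsc (m1*m2+n1*n2) x - nsc (m1*n2+n1*m2) x" by (metis zsc_diff_nat)
  moreover have "zsc a (zsc b x) = nsc m1 (nsc m2 x - nsc n2 x) - nsc n1 (nsc m2 x - nsc n2 x)"
    unfolding a b zsc_diff_nat ..
  moreover have "nsc n1 (nsc m2 x) = nsc m2 (nsc n1 x)" by (metis nsc_mult mult.commute)
  ultimately show ?thesis apply (simp add: nsc_add nsc_mult nsc_diff algebra_simps) by (metis add_left_cancel)
qed

lemma zsc_sum: "zsc a (sum f A) = sum (\<lambda>i. zsc a (f i)) A"
  by (induct A rule: infinite_finite_induct) (simp_all add: zsc_plus)

definition subgrp :: "'a::ab_group_add set \<Rightarrow> bool" where
  "subgrp S \<longleftrightarrow> 0 \<in> S \<and> (\<forall>x\<in>S. \<forall>y\<in>S. x + y \<in> S) \<and> (\<forall>x\<in>S. - x \<in> S)"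

lemma subgrp_nsc: "subgrp S \<Longrightarrow> x \<in> S \<Longrightarrow> nsc n x \<in> S"
  by (induct n) (auto simp: subgrp_def)
lemma subgrp_zsc: "subgrp S \<Longrightarrow> x \<in> S \<Longrightarrow> zsc a x \<in> S"
  unfolding zsc_def using subgrp_nsc
  by (metis (no_types, lifting) diff_conv_add_uminus subgrp_def)
lemma subgrp_sum: "subgrp S \<Longrightarrow> (\<And>i. i \<in> A \<Longrightarrow> f i \<in> S) \<Longrightarrow> sum f A \<in> S"
  by (induct A rule: infinite_finite_induct) (auto simp: subgrp_def)



lemma coc_0r: "cocycle c \<Longrightarrow> c (x, 0) = 0" unfolding cocycle_def by blast
lemma coc_sym: "cocycle c \<Longrightarrow> c (x, y) = c (y, x)" unfolding cocycle_def by blast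
lemma coc_0l: "cocycle c \<Longrightarrow> c (0, x) = 0" by (metis coc_0r coc_sym)
lemma coc_id: "cocycle c \<Longrightarrow> c (y, z) + c (x, y + z) = c (x + y, z) + c (x, y)"
proof -
  assume "cocycle c"
  then have "c (y, z) - c (x + y, z) + c (x, y + z) - c (x, y) = 0" unfolding cocycle_def by blast
  then show ?thesis by (simp add: algebra_simps)
qed

lemma coc_four:
  assumes "cocycle c"
  shows "c (a+b, a'+b') + c (a,b) + c (a',b') = c (a,a') + c (b,b') + c (a+a', b+b')"
proof -
  have i1: "c (b, a'+b') + c (a, b+(a'+b')) = c (a+b, a'+b') + c (a,b)" using coc_id[OF assms] .
  have i2: "c (a', b') + c (b, a'+b') = c (b+a', b') + c (b,a')" using coc_id[OF assms] .
  have i3: "c (b, b') + c (a', b+b') = c (a'+b, b') + c (a',b)" using coc_id[OF assms] .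
  have i4: "c (a', b+b') + c (a, a'+(b+b')) = c (a+a', b+b') + c (a,a')" using coc_id[OF assms] .
  have e1: "b+a' = a'+b" "a'+(b+b') = b+(a'+b')" by (simp_all add: algebra_simps)
  have e2: "c (b,a') = c (a',b)" using coc_sym[OF assms] .
  have "c (a+b, a'+b') + c (a,b) + c (a',b') = (c (b, a'+b') + c (a, b+(a'+b'))) + c (a',b')" by (simp only: i1)
  also have "\<dots> = (c (a', b') + c (b, a'+b')) + c (a, b+(a'+b'))" by (simp only: ac_simps)
  also have "\<dots> = (c (a'+b, b') + c (a',b)) + c (a, b+(a'+b'))" using i2 e1 e2 by simp
  also have "\<dots> = (c (b, b') + c (a', b+b')) + c (a, b+(a'+b'))" by (simp only: i3)
  also have "\<dots> = c (b, b') + (c (a', b+b') + c (a, a'+(b+b')))" by (simp only: e1 add.assoc)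
  also have "\<dots> = c (b, b') + (c (a+a', b+b') + c (a,a'))" by (simp only: i4)
  also have "\<dots> = c (a,a') + c (b,b') + c (a+a', b+b')" by (simp only: ac_simps)
  finally show ?thesis .
qed

definition sec :: "('a::ab_group_add \<times> 'a \<Rightarrow> 'g::ab_group_add) \<Rightarrow> 'a set \<Rightarrow> ('a \<Rightarrow> 'g) \<Rightarrow> bool" where
  "sec c H \<psi> \<longleftrightarrow> (\<forall>x\<in>H. \<forall>y\<in>H. c (x, y) = \<psi> (x + y) - \<psi> x - \<psi> y)"

lemma sec_sum:
  assumes coc: "cocycle c" and T: "subgrp T" and K: "subgrp K" and TK: "T \<inter> K \<subseteq> {0}"
    and s1: "sec c T \<psi>1" and s2: "sec c K \<psi>2"
  shows "\<exists>\<psi>. sec c {u + x | u x. u \<in> T \<and> x \<in> K} \<psi>"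
proof -
  have uniq: "u = u' \<and> x = x'" if "u\<in>T" "x\<in>K" "u'\<in>T" "x'\<in>K" "u+x = u'+x'" for u x u' x'
  proof -
    have "u - u' = x' - x" using that(5) by (simp add: algebra_simps)
    moreover have "u - u' \<in> T" using T that unfolding subgrp_def diff_conv_add_uminus by blast
    moreover have "x' - x \<in> K" using K that unfolding subgrp_def diff_conv_add_uminus by blast
    ultimately have "u - u' = 0" "x' - x = 0" using TK by auto
    then show ?thesis by simp
  qed
  define dec where "dec z = (SOME p. fst p \<in> T \<and> snd p \<in> K \<and> z = fst p + snd p)" for z
  have dec: "dec (u+x) = (u,x)" if "u\<in>T" "x\<in>K" for u x
  proof -
    have "fst (dec (u+x)) \<in> T \<and> snd (dec (u+x)) \<in> K \<and> u + x = fst (dec (u+x)) + snd (dec (u+x))"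
      unfolding dec_def by (rule someI[of _ "(u,x)"]) (use that in auto)
    then show ?thesis using uniq[OF that] by (metis prod.collapse)
  qed
  define \<psi> where "\<psi> z = \<psi>1 (fst (dec z)) + \<psi>2 (snd (dec z)) + c (fst (dec z), snd (dec z))" for z
  have \<psi>: "\<psi> (u+x) = \<psi>1 u + \<psi>2 x + c (u,x)" if "u\<in>T" "x\<in>K" for u x
    by (simp add: \<psi>_def dec that)
  have "sec c {u + x | u x. u \<in> T \<and> x \<in> K} \<psi>"
    unfolding sec_def
  proof (clarify)
    fix u x u' x' assume h: "u\<in>T" "x\<in>K" "u'\<in>T" "x'\<in>K"
    have sT: "u+u' \<in> T" "x+x' \<in> K" using T K h by (auto simp: subgrp_def)
    have r: "u + x + (u' + x') = (u+u') + (x+x')" by (simp add: algebra_simps)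
    have "c (u,u') = \<psi>1 (u+u') - \<psi>1 u - \<psi>1 u'" using s1 h unfolding sec_def by blast
    then have a1: "\<psi>1 (u+u') = c (u,u') + \<psi>1 u + \<psi>1 u'" by (simp add: algebra_simps)
    have "c (x,x') = \<psi>2 (x+x') - \<psi>2 x - \<psi>2 x'" using s2 h unfolding sec_def by blast
    then have a2: "\<psi>2 (x+x') = c (x,x') + \<psi>2 x + \<psi>2 x'" by (simp add: algebra_simps)
    have f: "c (u+x, u'+x') = c (u,u') + c (x,x') + c (u+u', x+x') - c (u,x) - c (u',x')"
      using coc_four[OF coc, of u x u' x'] by (simp add: algebra_simps)
    show "c (u + x, u' + x') = \<psi> (u + x + (u' + x')) - \<psi> (u + x) - \<psi> (u' + x')"
      unfolding r \<psi>[OF sT] \<psi>[OF h(1,2)] \<psi>[OF h(3,4)] a1 a2 f by (simp add: algebra_simps)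
  qed
  then show ?thesis by blast
qed

definition cyc :: "'a::ab_group_add \<Rightarrow> 'a set" where "cyc t = range (\<lambda>a. zsc a t)"

lemma cyc_subgrp: "subgrp (cyc t)"
  unfolding subgrp_def cyc_def
proof (intro conjI ballI)
  show "0 \<in> range (\<lambda>a. zsc a t)" by (rule range_eqI[of _ _ 0]) simp
next
  fix x y assume "x \<in> range (\<lambda>a. zsc a t)" "y \<in> range (\<lambda>a. zsc a t)"
  then obtain a b where "x = zsc a t" "y = zsc b t" by auto
  then show "x + y \<in> range (\<lambda>a. zsc a t)" by (intro range_eqI[of _ _ "a+b"]) (simp add: zsc_add)
next
  fix x assume "x \<in> range (\<lambda>a. zsc a t)"
  then obtain a where "x = zsc a t" by auto
  then show "- x \<in> range (\<lambda>a. zsc a t)" by (intro range_eqI[of _ _ "-a"]) (simp add: zsc_neg)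
qed



lemma sec_cyc_inf:
  assumes coc: "cocycle c" and inf: "\<forall>a. zsc a t = 0 \<longrightarrow> a = 0"
  shows "\<exists>\<psi>. sec c (cyc t) \<psi>"
proof -
  define P where "P a = (if 0 \<le> a then (\<Sum>i<nat a. c (zsc (int i) t, t))
     else - (\<Sum>i\<in>{1..nat (-a)}. c (zsc (- int i) t, t)))" for a
  have P0: "P 0 = 0" by (simp add: P_def)
  have step: "P (a+1) = P a + c (zsc a t, t)" for a
  proof (cases "0 \<le> a")
    case True
    then have "nat (a+1) = Suc (nat a)" by simp
    then show ?thesis using True by (simp add: P_def)
  next
    case False
    define m where "m = nat (-(a+1))"
    have m1: "nat (-a) = Suc m" using False m_def by simp
    have m2: "a = - int (Suc m)" using False m_def by simp
    have "P (a+1) = - (\<Sum>i\<in>{1..m}. c (zsc (- int i) t, t))"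
      using False m_def by (auto simp: P_def)
    moreover have "P a = - (\<Sum>i\<in>{1..Suc m}. c (zsc (- int i) t, t))"
      using False m1 by (simp add: P_def)
    ultimately show ?thesis using m2 by (simp add: sum.cl_ivl_Suc)
  qed
  have add: "P (a+b) = P a + P b + c (zsc a t, zsc b t)" for a b
  proof (induct b rule: int_induct[where k=0])
    case base
    then show ?case by (simp add: P0 coc_0r[OF coc])
  next
    case (step1 i)
    have "P (a + (i+1)) = P (a+i) + c (zsc (a+i) t, t)" using step[of "a+i"] by (simp add: add.assoc)
    also have "\<dots> = P a + P i + c (zsc a t, zsc i t) + c (zsc a t + zsc i t, t)" using step1 by (simp add: zsc_add)
    also have "\<dots> = P a + (P i + c (zsc i t, t)) + c (zsc a t, zsc i t + t)"
      using coc_id[OF coc, of "zsc i t" t "zsc a t"] by (simp add: algebra_simps)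
    also have "\<dots> = P a + P (i+1) + c (zsc a t, zsc (i+1) t)" by (simp add: step zsc_add)
    finally show ?case .
  next
    case (step2 i)
    define w where "w = zsc (i - 1) t"
    have zi: "zsc i t = w + t" unfolding w_def by (metis diff_add_cancel zsc_1 zsc_add)
    have q1: "a + (i-1) + 1 = a + i" by simp
    have q2: "zsc (a+(i-1)) t = zsc a t + w" unfolding w_def by (rule zsc_add)
    have s1: "P (a+i) = P (a+(i-1)) + c (zsc a t + w, t)" using step[of "a+(i-1)"] unfolding q1 q2 .
    have s2: "P i = P (i-1) + c (w, t)" using step[of "i-1"] unfolding w_def by simp
    have "P (a+(i-1)) = P (a+i) - c (zsc a t + w, t)" using s1 by simp
    also have "\<dots> = P a + P (i-1) + c (w,t) + c (zsc a t, w + t) - c (zsc a t + w, t)"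
      using step2 s2 zi by simp
    also have "\<dots> = P a + P (i-1) + c (zsc a t, w)"
      using coc_id[OF coc, of w t "zsc a t"] by (simp add: algebra_simps)
    finally show ?case unfolding w_def .
  qed
  have inj: "a = b" if "zsc a t = zsc b t" for a b
    using inf that by (metis eq_iff_diff_eq_0 zsc_sub)
  define \<psi> where "\<psi> z = P (SOME a. z = zsc a t)" for z
  have \<psi>: "\<psi> (zsc a t) = P a" for a
    unfolding \<psi>_def by (metis (mono_tags, lifting) inj someI)
  have "sec c (cyc t) \<psi>"
    unfolding sec_def cyc_def
  proof (clarify)
    fix a b
    show "c (zsc a t, zsc b t) = \<psi> (zsc a t + zsc b t) - \<psi> (zsc a t) - \<psi> (zsc b t)"
      unfolding zsc_add[symmetric] \<psi> add by simp
  qed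
  then show ?thesis by blast
qed



definition zspan :: "nat \<Rightarrow> (nat \<Rightarrow> 'a::ab_group_add) \<Rightarrow> 'a set" where
  "zspan n gs = range (\<lambda>ks. \<Sum>i<n. zsc (ks i) (gs i))"

lemma span_subgrp: "subgrp (zspan n gs)"
  unfolding subgrp_def zspan_def
proof (intro conjI ballI)
  show "0 \<in> range (\<lambda>ks. \<Sum>i<n. zsc (ks i) (gs i))"
    by (rule range_eqI[of _ _ "\<lambda>_. 0"]) simp
next
  fix x y assume "x \<in> range (\<lambda>ks. \<Sum>i<n. zsc (ks i) (gs i))" "y \<in> range (\<lambda>ks. \<Sum>i<n. zsc (ks i) (gs i))"
  then obtain k1 k2 where "x = (\<Sum>i<n. zsc (k1 i) (gs i))" "y = (\<Sum>i<n. zsc (k2 i) (gs i))" by auto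
  then show "x + y \<in> range (\<lambda>ks. \<Sum>i<n. zsc (ks i) (gs i))"
    by (intro range_eqI[of _ _ "\<lambda>i. k1 i + k2 i"]) (simp add: zsc_add sum.distrib)
next
  fix x assume "x \<in> range (\<lambda>ks. \<Sum>i<n. zsc (ks i) (gs i))"
  then obtain k1 where "x = (\<Sum>i<n. zsc (k1 i) (gs i))" by auto
  then show "- x \<in> range (\<lambda>ks. \<Sum>i<n. zsc (ks i) (gs i))"
    by (intro range_eqI[of _ _ "\<lambda>i. - k1 i"]) (simp add: zsc_neg sum_negf)
qed

lemma span_gen: assumes i: "i < n" shows "gs i \<in> zspan n gs"
proof -
  have "(\<Sum>j<n. zsc (if j = i then 1 else 0) (gs j)) = (\<Sum>j<n. if j = i then gs j else 0)"
    by (intro sum.cong) auto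
  also have "\<dots> = gs i" using i by (simp add: sum.delta)
  finally have "gs i = (\<Sum>j<n. zsc ((\<lambda>j. if j = i then 1 else 0) j) (gs j))" by simp
  then show ?thesis unfolding zspan_def by (intro range_eqI[where x="\<lambda>j. if j = i then (1::int) else 0"]) simp
qed

lemma span_min: "subgrp S \<Longrightarrow> (\<And>i. i < n \<Longrightarrow> gs i \<in> S) \<Longrightarrow> zspan n gs \<subseteq> S"
  unfolding zspan_def by (auto intro!: subgrp_sum subgrp_zsc)

lemma span_cong: "(\<And>i. i < n \<Longrightarrow> gs i = gs' i) \<Longrightarrow> zspan n gs = zspan n gs'"
  unfolding zspan_def by (intro image_cong refl sum.cong) auto

lemma span_Suc: "zspan (Suc n) gs = {u + x | u x. u \<in> cyc (gs n) \<and> x \<in> zspan n gs}"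
proof
  show "zspan (Suc n) gs \<subseteq> {u + x | u x. u \<in> cyc (gs n) \<and> x \<in> zspan n gs}"
    unfolding zspan_def cyc_def by (auto simp: add.commute)
next
  show "{u + x | u x. u \<in> cyc (gs n) \<and> x \<in> zspan n gs} \<subseteq> zspan (Suc n) gs"
  proof clarify
    fix u x assume "u \<in> cyc (gs n)" "x \<in> zspan n gs"
    then obtain a ks where u: "u = zsc a (gs n)" and x: "x = (\<Sum>i<n. zsc (ks i) (gs i))"
      unfolding cyc_def zspan_def by auto
    have "x = (\<Sum>i<n. zsc ((ks(n := a)) i) (gs i))" unfolding x by (intro sum.cong) auto
    then have "u + x = (\<Sum>i<Suc n. zsc ((ks(n := a)) i) (gs i))" using u by (simp add: add.commute)
    then show "u + x \<in> zspan (Suc n) gs" unfolding zspan_def by blast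
  qed
qed

lemma sum_two:
  assumes "finite A" "j \<in> A" "n \<in> A" "j \<noteq> n"
  shows "sum f A = sum f (A - {j, n}) + f j + f n"
proof -
  have "sum f A = f j + sum f (A - {j})" using assms by (simp add: sum.remove)
  also have "sum f (A - {j}) = f n + sum f (A - {j} - {n})" using assms by (simp add: sum.remove)
  finally show ?thesis by (simp add: algebra_simps Diff_insert2[symmetric])
qed



lemma sum_upd_last:
  "(\<Sum>i<Suc n. zsc ((ks(n := b)) i) (g i)) = (\<Sum>i<n. zsc (ks i) (g i)) + zsc b (g n)"
proof -
  have "(\<Sum>i<n. zsc ((ks(n := b)) i) (g i)) = (\<Sum>i<n. zsc (ks i) (g i))"
    by (intro sum.cong) auto
  then show ?thesis by simp
qed

lemma zsc_mod:
  assumes "zsc k t = 0"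
  shows "zsc a t = zsc (a mod k) t"
proof -
  have "a = a div k * k + a mod k" by simp
  then have "zsc a t = zsc (a div k * k) t + zsc (a mod k) t" by (metis zsc_add)
  also have "zsc (a div k * k) t = 0" using assms by (simp add: zsc_mult)
  finally show ?thesis by simp
qed

lemma subgrp_diff: "subgrp S \<Longrightarrow> x \<in> S \<Longrightarrow> y \<in> S \<Longrightarrow> x - y \<in> S"
  unfolding subgrp_def diff_conv_add_uminus by blast

lemma main:
  fixes c :: "'a::ab_group_add \<times> 'a \<Rightarrow> 'g::ab_group_add"
  assumes coc: "cocycle c" and hyp: "\<And>S. finite_subgroup S \<Longrightarrow> coboundary_on S c"
  shows "\<exists>\<psi>. sec c (zspan n gs) \<psi>"
proof (induct n arbitrary: gs)
  case 0
  have "zspan 0 gs = {0}" by (simp add: zspan_def)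
  then show ?case using coc_0r[OF coc] by (auto simp: sec_def intro!: exI[of _ "\<lambda>_. 0"])
next
  case (Suc n)
  define H where "H = zspan (Suc n) gs"
  define rel where "rel g ks \<longleftrightarrow> zspan (Suc n) g = H \<and> (\<Sum>i<Suc n. zsc (ks i) (g i)) = 0 \<and> ks n \<noteq> 0"
    for g :: "nat \<Rightarrow> 'a" and ks
  have comb: "\<exists>\<psi>. sec c H \<psi>"
    if g1: "zspan (Suc n) g = H" and g2: "cyc (g n) \<inter> zspan n g \<subseteq> {0}"
      and g3: "\<exists>\<psi>. sec c (cyc (g n)) \<psi>" for g
  proof -
    obtain \<psi>2 where p2: "sec c (zspan n g) \<psi>2" using Suc by blast
    obtain \<psi>1 where p1: "sec c (cyc (g n)) \<psi>1" using g3 by blast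
    show ?thesis using sec_sum[OF coc cyc_subgrp span_subgrp g2 p1 p2] g1 span_Suc[of n g] by simp
  qed
  show "\<exists>\<psi>. sec c (zspan (Suc n) gs) \<psi>"
  proof (cases "\<exists>g ks. rel g ks")
    case False
    let ?t = "gs n"
    have key: "a = 0" if "zsc a ?t \<in> zspan n gs" for a
    proof (rule ccontr)
      assume a: "a \<noteq> 0"
      from that obtain ks where ks: "zsc a ?t = (\<Sum>i<n. zsc (ks i) (gs i))" by (auto simp: zspan_def)
      have "(\<Sum>i<Suc n. zsc ((ks(n := -a)) i) (gs i)) = 0"
        unfolding sum_upd_last using ks by (simp add: zsc_neg)
      then have "rel gs (ks(n := -a))" using a by (simp add: rel_def H_def)
      with False show False by blast
    qed
    have inter: "cyc ?t \<inter> zspan n gs \<subseteq> {0}"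
      unfolding cyc_def
    proof clarsimp
      fix a assume "zsc a (gs n) \<in> zspan n gs"
      then have "a = 0" by (rule key)
      then show "zsc a (gs n) = 0" by simp
    qed
    have inf: "\<forall>a. zsc a ?t = 0 \<longrightarrow> a = 0"
      using key span_subgrp[of n gs] by (auto simp: subgrp_def)
    show ?thesis unfolding H_def[symmetric] using comb[of gs, OF _ inter sec_cyc_inf[OF coc inf]] H_def by simp
  next
    case True
    define R where "R = {nat \<bar>ks n\<bar> | g ks. rel g ks}"
    have "\<exists>r. r \<in> R" using True by (auto simp: R_def)
    define m where "m = (LEAST r. r \<in> R)"
    have "m \<in> R" unfolding m_def using \<open>\<exists>r. r \<in> R\<close> by (metis LeastI_ex)
    have mmin: "m \<le> r" if "r \<in> R" for r unfolding m_def using that by (rule Least_le)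
    obtain g0 ks0 where rel0: "rel g0 ks0" and m0: "m = nat \<bar>ks0 n\<bar>"
      using \<open>m \<in> R\<close> by (auto simp: R_def)
    define ks where "ks = (if ks0 n > 0 then ks0 else (\<lambda>i. - ks0 i))"
    have relk: "rel g0 ks"
    proof (cases "ks0 n > 0")
      case True then show ?thesis using rel0 by (simp add: ks_def)
    next
      case False
      have e: "(\<Sum>i<Suc n. zsc (- ks0 i) (g0 i)) = - (\<Sum>i<Suc n. zsc (ks0 i) (g0 i))"
        by (simp only: zsc_neg sum_negf)
      have s0: "(\<Sum>i<Suc n. zsc (ks0 i) (g0 i)) = 0" using rel0 unfolding rel_def by blast
      have kk: "ks = (\<lambda>i. - ks0 i)" using False ks_def by simp
      have "(\<Sum>i<Suc n. zsc (ks i) (g0 i)) = 0" unfolding kk e s0 by simp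
      then show ?thesis using rel0 False unfolding rel_def ks_def by simp
    qed
    define k where "k = ks n"
    have kpos: "k > 0" using rel0 unfolding k_def ks_def rel_def by auto
    have km: "k = int m" using m0 kpos unfolding k_def ks_def by (auto split: if_splits)
    have minim: "k \<le> \<bar>ks' n\<bar>" if "rel g ks'" for g ks'
    proof -
      have "nat \<bar>ks' n\<bar> \<in> R" using that by (auto simp: R_def)
      then have "m \<le> nat \<bar>ks' n\<bar>" by (rule mmin)
      then show ?thesis using km by simp
    qed
    have H0: "zspan (Suc n) g0 = H" and rsum: "(\<Sum>i<Suc n. zsc (ks i) (g0 i)) = 0"
      using relk by (auto simp: rel_def)
    have dvd: "k dvd ks j" if jn: "j < n" for j
    proof (rule ccontr)
      assume nd: "\<not> k dvd ks j"
      define q where "q = ks j div k"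
      define r where "r = ks j mod k"
      have r: "0 < r" "r < k"
        using nd kpos unfolding r_def
        by (auto simp: dvd_eq_mod_eq_0 order_le_less pos_mod_sign pos_mod_bound
            intro: order.not_eq_order_implies_strict[OF _ pos_mod_sign])
      have qr: "ks j = k*q + r" unfolding q_def r_def by simp
      define g2 where "g2 = g0(j := g0 n + zsc q (g0 j), n := g0 j)"
      define ks2 where "ks2 = ks(j := k, n := r)"
      have jn': "j \<noteq> n" "j \<in> {..<Suc n}" "n \<in> {..<Suc n}" using jn by auto
      have rest: "(\<Sum>i\<in>{..<Suc n} - {j, n}. zsc (ks2 i) (g2 i)) = (\<Sum>i\<in>{..<Suc n} - {j, n}. zsc (ks i) (g0 i))"
        by (intro sum.cong) (auto simp: ks2_def g2_def)
      have "(\<Sum>i<Suc n. zsc (ks2 i) (g2 i))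
          = (\<Sum>i\<in>{..<Suc n} - {j, n}. zsc (ks2 i) (g2 i)) + zsc (ks2 j) (g2 j) + zsc (ks2 n) (g2 n)"
        by (rule sum_two[OF finite_lessThan jn'(2,3,1)])
      also have "\<dots> = (\<Sum>i\<in>{..<Suc n} - {j, n}. zsc (ks i) (g0 i)) + zsc k (g0 n + zsc q (g0 j)) + zsc r (g0 j)"
        unfolding rest using jn'(1) by (simp add: ks2_def g2_def)
      also have "\<dots> = (\<Sum>i\<in>{..<Suc n} - {j, n}. zsc (ks i) (g0 i)) + zsc (ks j) (g0 j) + zsc (ks n) (g0 n)"
        unfolding qr zsc_plus zsc_add zsc_mult k_def by (simp add: algebra_simps)
      also have "\<dots> = (\<Sum>i<Suc n. zsc (ks i) (g0 i))"
        by (rule sum_two[OF finite_lessThan jn'(2,3,1), symmetric])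
      finally have s2: "(\<Sum>i<Suc n. zsc (ks2 i) (g2 i)) = 0" using rsum by simp
      have sub1: "zspan (Suc n) g2 \<subseteq> zspan (Suc n) g0"
      proof (rule span_min[OF span_subgrp])
        fix i assume i: "i < Suc n"
        have A: "g0 n \<in> zspan (Suc n) g0" "g0 j \<in> zspan (Suc n) g0" "g0 i \<in> zspan (Suc n) g0"
          using i jn by (auto intro: span_gen)
        have B: "g0 n + zsc q (g0 j) \<in> zspan (Suc n) g0"
          using A span_subgrp[of "Suc n" g0] subgrp_zsc[OF span_subgrp A(2)] by (auto simp: subgrp_def)
        show "g2 i \<in> zspan (Suc n) g0" using A B by (auto simp: g2_def)
      qed
      have sub2: "zspan (Suc n) g0 \<subseteq> zspan (Suc n) g2"
      proof (rule span_min[OF span_subgrp])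
        fix i assume i: "i < Suc n"
        have A: "g2 n \<in> zspan (Suc n) g2" "g2 j \<in> zspan (Suc n) g2" "g2 i \<in> zspan (Suc n) g2"
          using i jn by (auto intro: span_gen)
        have e: "g0 n = g2 j - zsc q (g2 n)" using jn'(1) by (simp add: g2_def)
        have B: "g0 n \<in> zspan (Suc n) g2"
          unfolding e by (rule subgrp_diff[OF span_subgrp A(2) subgrp_zsc[OF span_subgrp A(1)]])
        have C: "g0 j = g2 n" by (simp add: g2_def)
        have D: "i \<noteq> j \<Longrightarrow> i \<noteq> n \<Longrightarrow> g0 i = g2 i" by (simp add: g2_def)
        show "g0 i \<in> zspan (Suc n) g2" using A B C D by (cases "i = n"; cases "i = j") auto
      qed
      have "rel g2 ks2" using sub1 sub2 H0 s2 r by (simp add: rel_def ks2_def)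
      then have "k \<le> \<bar>ks2 n\<bar>" by (rule minim)
      then show False using r by (simp add: ks2_def)
    qed
    define t where "t = g0 n + (\<Sum>j<n. zsc (ks j div k) (g0 j))"
    have kt: "zsc k t = 0"
    proof -
      have "zsc k t = zsc k (g0 n) + (\<Sum>j<n. zsc (k * (ks j div k)) (g0 j))"
        unfolding t_def zsc_plus zsc_sum zsc_mult ..
      also have "(\<Sum>j<n. zsc (k * (ks j div k)) (g0 j)) = (\<Sum>j<n. zsc (ks j) (g0 j))"
        using dvd by (intro sum.cong) auto
      finally show ?thesis using rsum by (simp add: k_def add.commute)
    qed
    define g3 where "g3 = g0(n := t)"
    have span3n: "zspan n g3 = zspan n g0" by (rule span_cong) (simp add: g3_def)
    have tin: "t \<in> zspan (Suc n) g0"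
    proof -
      have "g0 n \<in> zspan (Suc n) g0" by (auto intro: span_gen)
      moreover have "(\<Sum>j<n. zsc (ks j div k) (g0 j)) \<in> zspan (Suc n) g0"
        by (intro subgrp_sum[OF span_subgrp] subgrp_zsc[OF span_subgrp] span_gen) auto
      ultimately show ?thesis using span_subgrp[of "Suc n" g0] by (auto simp: subgrp_def t_def)
    qed
    have span3: "zspan (Suc n) g3 = H"
    proof -
      have "zspan (Suc n) g3 \<subseteq> zspan (Suc n) g0"
        by (rule span_min[OF span_subgrp]) (auto simp: g3_def tin intro: span_gen)
      moreover have "zspan (Suc n) g0 \<subseteq> zspan (Suc n) g3"
      proof (rule span_min[OF span_subgrp])
        fix i assume i: "i < Suc n"
        show "g0 i \<in> zspan (Suc n) g3"
        proof (cases "i = n")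
          case False
          then show ?thesis using i span_gen[of i "Suc n" g3] by (simp add: g3_def)
        next
          case True
          have e: "g0 n = g3 n - (\<Sum>j<n. zsc (ks j div k) (g3 j))"
            by (simp add: g3_def t_def)
          have "(\<Sum>j<n. zsc (ks j div k) (g3 j)) \<in> zspan (Suc n) g3"
            by (intro subgrp_sum[OF span_subgrp] subgrp_zsc[OF span_subgrp] span_gen) auto
          moreover have "g3 n \<in> zspan (Suc n) g3" by (auto intro: span_gen)
          ultimately show ?thesis unfolding True e by (intro subgrp_diff[OF span_subgrp])
        qed
      qed
      ultimately show ?thesis using H0 by simp
    qed
    have key: "zsc a t = 0" if ain: "zsc a t \<in> zspan n g3" for a
    proof -
      define r where "r = a mod k"
      have ar: "zsc a t = zsc r t" unfolding r_def by (rule zsc_mod[OF kt])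
      have r: "0 \<le> r" "r < k" using kpos by (auto simp: r_def)
      show ?thesis
      proof (cases "r = 0")
        case True then show ?thesis using ar by simp
      next
        case False
        obtain ls where ls: "zsc r t = (\<Sum>i<n. zsc (ls i) (g3 i))"
        proof -
          have "zsc r t \<in> zspan n g3" using ain ar by simp
          then show ?thesis using that unfolding zspan_def by blast
        qed
        have "(\<Sum>i<Suc n. zsc ((ls(n := -r)) i) (g3 i)) = 0"
          unfolding sum_upd_last using ls by (simp add: zsc_neg g3_def)
        then have "rel g3 (ls(n := -r))" using False span3 by (simp add: rel_def)
        then have "k \<le> \<bar>-r\<bar>" using minim by fastforce
        then show ?thesis using r by simp
      qed
    qed
    have inter: "cyc (g3 n) \<inter> zspan n g3 \<subseteq> {0}" using key by (auto simp: cyc_def g3_def)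
    have cycfin: "cyc t = (\<lambda>r. zsc r t) ` {0..<k}"
    proof
      show "cyc t \<subseteq> (\<lambda>r. zsc r t) ` {0..<k}"
      proof
        fix x assume "x \<in> cyc t"
        then obtain a where "x = zsc a t" by (auto simp: cyc_def)
        then have "x = zsc (a mod k) t" using zsc_mod[OF kt] by simp
        moreover have "a mod k \<in> {0..<k}" using kpos by simp
        ultimately show "x \<in> (\<lambda>r. zsc r t) ` {0..<k}" by blast
      qed
    qed (auto simp: cyc_def)
    have "finite_subgroup (cyc t)"
      using cyc_subgrp[of t] cycfin unfolding finite_subgroup_def subgrp_def by auto
    then obtain \<phi> where phi: "\<forall>x\<in>cyc t. \<forall>y\<in>cyc t. c (x, y) = \<phi> y - \<phi> (x + y) + \<phi> x"
      using hyp unfolding coboundary_on_def by blast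
    have "sec c (cyc (g3 n)) (\<lambda>x. - \<phi> x)"
      using phi unfolding sec_def g3_def by simp
    then show ?thesis unfolding H_def[symmetric] using comb[of g3, OF span3 inter] by blast
  qed
qed



lemma B_sub_Z: "(Bgrp :: ('a::ab_group_add \<times> 'a \<Rightarrow> 'g::ab_group_add) set) \<subseteq> Zgrp"
proof
  fix c :: "'a \<times> 'a \<Rightarrow> 'g" assume "c \<in> Bgrp"
  then obtain \<phi> :: "'a \<Rightarrow> 'g" where p0: "\<phi> 0 = 0" and p: "\<And>x y. c (x, y) = \<phi> y - \<phi> (x + y) + \<phi> x"
    unfolding Bgrp_def coboundary_on_def by blast
  show "c \<in> Zgrp" unfolding Zgrp_def cocycle_def
    by (simp add: p p0 algebra_simps)
qed

lemma B_sub_Bw: "(Bgrp :: ('a::ab_group_add \<times> 'a \<Rightarrow> 'g::ab_group_add) set) \<subseteq> Bw_grp"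
  using B_sub_Z unfolding Bw_grp_def Bgrp_def coboundary_on_def by blast

lemma top_cochain[simp]: "topspace cochain_top = UNIV"
  unfolding cochain_top_def by (simp add: PiE_UNIV_domain)

lemma cob_cong: "(\<And>x y. x \<in> S \<Longrightarrow> y \<in> S \<Longrightarrow> e (x, y) = d (x, y)) \<Longrightarrow>
    coboundary_on S e = coboundary_on S d"
  unfolding coboundary_on_def by auto

lemma closed_Cs: "closedin cochain_top {c :: 'a::ab_group_add \<times> 'a \<Rightarrow> 'g::ab_group_add. finite_subgroup S \<longrightarrow> coboundary_on S c}"
proof -
  let ?C = "{c :: 'a \<times> 'a \<Rightarrow> 'g. finite_subgroup S \<longrightarrow> coboundary_on S c}"
  have "openin cochain_top (UNIV - ?C)"
  proof (subst openin_subopen, intro ballI)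
    fix d assume "d \<in> UNIV - ?C"
    then have fs: "finite_subgroup S" and nd: "\<not> coboundary_on S d" by auto
    define V where "V p = (if p \<in> S \<times> S then {d p} else UNIV)" for p
    have "{p. V p \<noteq> UNIV} \<subseteq> S \<times> S" unfolding V_def by auto
    moreover have "finite (S \<times> S)" using fs unfolding finite_subgroup_def by simp
    ultimately have fin: "finite {p. V p \<noteq> UNIV}" by (rule finite_subset)
    have op: "openin cochain_top (PiE UNIV V)"
      unfolding cochain_top_def openin_PiE_gen using fin by simp
    have dV: "d \<in> PiE UNIV V" unfolding PiE_UNIV_domain V_def by simp
    have sub: "PiE UNIV V \<subseteq> UNIV - ?C"
    proof
      fix e assume "e \<in> PiE UNIV V"
      have "e (x, y) = d (x, y)" if "x \<in> S" "y \<in> S" for x y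
        using PiE_mem[OF \<open>e \<in> PiE UNIV V\<close> UNIV_I, of "(x,y)"] that by (simp add: V_def)
      then have "coboundary_on S e = coboundary_on S d" by (rule cob_cong)
      then show "e \<in> UNIV - ?C" using nd fs by simp
    qed
    show "\<exists>T. openin cochain_top T \<and> d \<in> T \<and> T \<subseteq> UNIV - ?C"
      using op dV sub by blast
  qed
  then show ?thesis unfolding closedin_def by simp
qed

lemma Bw_closed: "closedin Ztop (Bw_grp :: ('a::ab_group_add \<times> 'a \<Rightarrow> 'g::ab_group_add) set)"
proof -
  let ?K = "range (\<lambda>S. {c :: 'a \<times> 'a \<Rightarrow> 'g. finite_subgroup S \<longrightarrow> coboundary_on S c})"
  have "closedin cochain_top (\<Inter>?K)"
    by (rule closedin_Inter) (auto intro: closed_Cs)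
  moreover have "Bw_grp = \<Inter>?K \<inter> Zgrp" unfolding Bw_grp_def by auto
  ultimately show ?thesis unfolding Ztop_def closedin_subtopology by blast
qed

lemma Bw_in_closure:
  fixes c :: "'a::ab_group_add \<times> 'a \<Rightarrow> 'g::ab_group_add"
  assumes cw: "c \<in> Bw_grp"
  shows "c \<in> Ztop closure_of Bgrp"
proof -
  have coc: "cocycle c" and hyp: "\<And>S. finite_subgroup S \<Longrightarrow> coboundary_on S c"
    using cw unfolding Bw_grp_def Zgrp_def by auto
  have "c \<in> topspace Ztop" using cw unfolding Ztop_def Bw_grp_def by simp
  moreover have "\<exists>y. y \<in> Bgrp \<and> y \<in> T" if cT: "c \<in> T" and oT: "openin Ztop T" for T
  proof -
    obtain U where oU: "openin cochain_top U" and TU: "T = U \<inter> Zgrp"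
      using oT unfolding Ztop_def openin_subtopology by blast
    have "c \<in> U" using cT TU by simp
    then obtain V where finV: "finite {p. V p \<noteq> UNIV}" and cV: "c \<in> PiE UNIV V"
        and VU: "PiE UNIV V \<subseteq> U"
      using oU unfolding cochain_top_def openin_product_topology_alt by auto
    define F where "F = {p. V p \<noteq> UNIV}"
    define X where "X = fst ` F \<union> snd ` F"
    have "finite X" using finV unfolding X_def F_def by simp
    then obtain gs where gs: "bij_betw gs {0..<card X} X" using ex_bij_betw_nat_finite by blast
    define n where "n = card X"
    have Xs: "x \<in> zspan n gs" if "x \<in> X" for x
    proof -
      have "x \<in> gs ` {0..<n}" using gs that unfolding n_def bij_betw_def by simp
      then obtain i where "i \<in> {0..<n}" "x = gs i" by blast
      then show ?thesis by (simp add: span_gen)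
    qed
    obtain \<psi> where ps: "sec c (zspan n gs) \<psi>" using main[OF coc hyp] by blast
    have "0 \<in> zspan n gs" using span_subgrp unfolding subgrp_def by blast
    then have "c (0, 0) = \<psi> 0 - \<psi> 0 - \<psi> 0" using ps unfolding sec_def by force
    then have ps0: "\<psi> 0 = 0" using coc_0r[OF coc] by simp
    define b where "b p = \<psi> (fst p + snd p) - \<psi> (fst p) - \<psi> (snd p)" for p
    have bB: "b \<in> Bgrp"
      unfolding Bgrp_def coboundary_on_def
      by (auto intro!: exI[of _ "\<lambda>x. - \<psi> x"] simp: ps0 b_def algebra_simps)
    have bV: "b \<in> PiE UNIV V"
    proof (simp add: PiE_iff, intro allI)
      fix p
      show "b p \<in> V p"
      proof (cases "p \<in> F")
        case True
        then have "fst p \<in> zspan n gs" "snd p \<in> zspan n gs" using Xs unfolding X_def by auto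
        then have "b p = c p" using ps unfolding sec_def b_def by (cases p) auto
        then show ?thesis using PiE_mem[OF cV UNIV_I, of p] by simp
      next
        case False then show ?thesis by (simp add: F_def)
      qed
    qed
    have "b \<in> T" using bV VU bB B_sub_Z TU by auto
    then show ?thesis using bB by blast
  qed
  ultimately show ?thesis unfolding in_closure_of by blast
qed

theorem lemma3p2:
  shows "Ztop closure_of (Bgrp :: ('a::{ab_group_add,countable} \<times> 'a \<Rightarrow> 'g::{ab_group_add,countable}) set) = Bw_grp
     \<and> closedin Ztop (Bw_grp :: ('a \<times> 'a \<Rightarrow> 'g) set)"
proof
  show "closedin Ztop (Bw_grp :: ('a \<times> 'a \<Rightarrow> 'g) set)" by (rule Bw_closed)
  show "Ztop closure_of (Bgrp :: ('a \<times> 'a \<Rightarrow> 'g) set) = Bw_grp"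
  proof
    show "Ztop closure_of (Bgrp :: ('a \<times> 'a \<Rightarrow> 'g) set) \<subseteq> Bw_grp"
      by (rule closure_of_minimal[OF B_sub_Bw Bw_closed])
    show "(Bw_grp :: ('a \<times> 'a \<Rightarrow> 'g) set) \<subseteq> Ztop closure_of Bgrp"
      using Bw_in_closure by blast
  qed
qed

end
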